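(* Let $\{c_n\}_{n\ge1}$ be a real sequence with $\sum_{n=1}^\infty (c_n)^2<+\infty$ and $\sum_{n=N}^\infty (c_n)^2>0$ for every $N\ge1$. If $$\lim_{N\to\infty}\frac{(c_N)^2}{\sum_{n=N}^\infty (c_n)^2}=0,$$ then $$\lim_{N\to\infty}\frac{\sup_{n\ge N}(c_n)^2}{\sum_{n=N}^\infty (c_n)^2}=0.$$ *)

theory Defs
  imports "HOL-Analysis.Analysis"
begin

end

theory Submission
  imports Defs
begin

theorem lemma2p5:
  fixes c :: "nat \<Rightarrow> real"
  assumes summ: "summable (\<lambda>n. (c (Suc n))\<^sup>2)"
    and pos: "\<And>N. N \<ge> 1 \<Longrightarrow> (\<Sum>k. (c (k + N))\<^sup>2) > 0"
    and lim: "(\<lambda>N. (c N)\<^sup>2 / (\<Sum>k. (c (k + N))\<^sup>2)) \<longlonglongrightarrow> 0"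
  shows "(\<lambda>N. (SUP n\<in>{N..}. (c n)\<^sup>2) / (\<Sum>k. (c (k + N))\<^sup>2)) \<longlonglongrightarrow> 0"
proof -
  define f where "f = (\<lambda>n. (c n)\<^sup>2)"
  define T where "T = (\<lambda>N. \<Sum>k. f (k + N))"
  have sf: "summable f" using summ summable_Suc_iff[of f] by (simp add: f_def)
  have Teq: "T m = suminf f - sum f {..<m}" for m
    using suminf_split_initial_segment[OF sf, of m] by (simp add: T_def)
  have Tmono: "T n \<le> T N" if "N \<le> n" for n N
  proof -
    have "sum f {..<N} \<le> sum f {..<n}"
      by (rule sum_mono2) (use that in \<open>auto simp: f_def\<close>)
    thus ?thesis by (simp add: Teq)
  qed
  have Tpos: "N \<ge> 1 \<Longrightarrow> T N > 0" for N using pos by (simp add: T_def f_def)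
  show ?thesis
    unfolding LIMSEQ_iff
  proof (intro allI impI)
    fix r :: real assume r: "r > 0"
    from lim have "\<forall>r>0. \<exists>no. \<forall>n\<ge>no. norm (f n / T n - 0) < r"
      unfolding LIMSEQ_iff f_def T_def by blast
    then obtain no where no: "\<And>n. n \<ge> no \<Longrightarrow> norm (f n / T n) < r / 2"
      using r by (metis diff_zero half_gt_zero)
    show "\<exists>no. \<forall>n\<ge>no. norm ((SUP n\<in>{n..}. (c n)\<^sup>2) / (\<Sum>k. (c (k + n))\<^sup>2) - 0) < r"
    proof (intro exI allI impI)
      fix N assume N: "N \<ge> max no 1"
      have TN: "T N > 0" using Tpos N by simp
      have bnd: "f n \<le> r / 2 * T N" if "n \<ge> N" for n
      proof -
        have Tn: "T n > 0" using Tpos N that by simp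
        have "f n / T n < r / 2" using no[of n] N that Tn by (simp add: f_def abs_of_pos)
        hence "f n < r / 2 * T n" using Tn by (simp add: divide_less_eq)
        also have "\<dots> \<le> r / 2 * T N" using Tmono[OF that] r by simp
        finally show ?thesis by simp
      qed
      have bdd: "bdd_above (f ` {N..})" using bnd by (intro bdd_aboveI2[where M="r / 2 * T N"]) auto
      have S1: "(SUP n\<in>{N..}. f n) \<le> r / 2 * T N"
        by (rule cSUP_least) (use bnd in auto)
      have S0: "0 \<le> (SUP n\<in>{N..}. f n)"
        using cSUP_upper[OF _ bdd, of N] by (simp add: f_def) (smt (verit) zero_le_power2)
      have "(SUP n\<in>{N..}. f n) / T N \<le> r / 2"
        using S1 TN by (simp add: divide_le_eq)
      moreover have "0 \<le> (SUP n\<in>{N..}. f n) / T N" using S0 TN by simp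
      ultimately have "\<bar>(SUP n\<in>{N..}. f n) / T N\<bar> < r" using r by linarith
      thus "norm ((SUP n\<in>{N..}. (c n)\<^sup>2) / (\<Sum>k. (c (k + N))\<^sup>2) - 0) < r"
        unfolding f_def T_def by simp
    qed
  qed
qed

end
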